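(* Let $J=(G=(V,E),s,t,c,\omega,d,a)$ be an instance of WMCP and let $u,v\in V$ be distinct vertices with $\{u,v\}\neq\{s,t\}$ such that every $(u,v)$-cut $A$ in $G$ satisfies $\omega(A)\ge a+1$. Then the merge of $u$ and $v$ in $J$ is an instance of WMCP equivalent to $J$.
   Context: All graphs are finite, simple and undirected. For a graph $G=(V,E)$ and distinct $x,y\in V$, an $(x,y)$-cut is an edge set $A\subseteq E$ such that $G-A$ contains no path from $x$ to $y$. For $f$ on $E$ and $F\subseteq E$, $f(F)=\sum_{e\in F}f(e)$. WMCP: input $G=(V,E)$, $s,t\in V$, $c:E\to\mathbb{N}$ (positive integers), $\omega:E\to\mathbb{N}$ (positive integers), integers $d,a$; question: is there $D\subseteq E$ with $c(D)\le d$ such that every $(s,t)$-cut $A\subseteq E\setminus D$ satisfies $\omega(A)>a$? Merge: for vertices $u,w$ (not necessarily adjacent), the merge of $u$ and $w$ in an instance is obtained by deleting $u$ and $w$ and adding a new vertex $v_{\{u,w\}}$ adjacent to every vertex of $N(\{u,w\})=(N(u)\cup N(w))\setminus\{u,w\}$; edges not incident with $u$ or $w$ keep their cost and capacity; for each $x\in N(\{u,w\})$ the new edge $\{v_{\{u,w\}},x\}$ gets cost $\min\{c(e'):e'\in E(x,\{u,w\})\}$ and capacity $\sum_{e'\in E(x,\{u,w\})}\omega(e')$, where $E(x,\{u,w\})$ is the set of edges between $x$ and $\{u,w\}$; if $s$ (resp. $t$) is among the merged vertices the new vertex takes its role; $d$ and $a$ are unchanged. Two instances are equivalent if both are yes-instances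 or both are no-instances. *)

theory Defs
  imports Main
begin

definition simple_graph :: "'v set \<Rightarrow> 'v set set \<Rightarrow> bool" where
  "simple_graph V E \<longleftrightarrow> finite V \<and>
     (\<forall>e\<in>E. \<exists>x y. e = {x, y} \<and> x \<in> V \<and> y \<in> V \<and> x \<noteq> y)"

text \<open>A walk (vertex sequence) using only edges of F; a path from x to y exists
  iff a walk from x to y exists.\<close>
definition is_walk :: "'v set set \<Rightarrow> 'v list \<Rightarrow> bool" where
  "is_walk F xs \<longleftrightarrow> xs \<noteq> [] \<and> (\<forall>i. Suc i < length xs \<longrightarrow> {xs ! i, xs ! Suc i} \<in> F)"

definition has_path :: "'v set set \<Rightarrow> 'v \<Rightarrow> 'v \<Rightarrow> bool" where
  "has_path F x y \<longleftrightarrow> (\<exists>xs. is_walk F xs \<and> hd xs = x \<and> last xs = y)"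

definition is_cut :: "'v set set \<Rightarrow> 'v \<Rightarrow> 'v \<Rightarrow> 'v set set \<Rightarrow> bool" where
  "is_cut E x y A \<longleftrightarrow> A \<subseteq> E \<and> \<not> has_path (E - A) x y"

definition wmcp_instance ::
  "'v set \<Rightarrow> 'v set set \<Rightarrow> 'v \<Rightarrow> 'v \<Rightarrow> ('v set \<Rightarrow> nat) \<Rightarrow> ('v set \<Rightarrow> nat) \<Rightarrow> bool" where
  "wmcp_instance V E s t c \<omega> \<longleftrightarrow> simple_graph V E \<and> s \<in> V \<and> t \<in> V \<and> s \<noteq> t \<and>
     (\<forall>e\<in>E. c e > 0 \<and> \<omega> e > 0)"

definition wmcp_yes ::
  "'v set set \<Rightarrow> 'v \<Rightarrow> 'v \<Rightarrow> ('v set \<Rightarrow> nat) \<Rightarrow> ('v set \<Rightarrow> nat) \<Rightarrow> int \<Rightarrow> int \<Rightarrow> bool" where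
  "wmcp_yes E s t c \<omega> d a \<longleftrightarrow>
     (\<exists>D\<subseteq>E. int (sum c D) \<le> d \<and>
        (\<forall>A. is_cut E s t A \<and> A \<subseteq> E - D \<longrightarrow> int (sum \<omega> A) > a))"

text \<open>Merging u and w into a new vertex z (z must not be an old vertex other than u, w).\<close>
definition mmap :: "'v \<Rightarrow> 'v \<Rightarrow> 'v \<Rightarrow> 'v \<Rightarrow> 'v" where
  "mmap z u w x = (if x = u \<or> x = w then z else x)"

definition merge_V :: "'v set \<Rightarrow> 'v \<Rightarrow> 'v \<Rightarrow> 'v \<Rightarrow> 'v set" where
  "merge_V V z u w = (V - {u, w}) \<union> {z}"

definition merge_E :: "'v set set \<Rightarrow> 'v \<Rightarrow> 'v \<Rightarrow> 'v \<Rightarrow> 'v set set" where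
  "merge_E E z u w =
     {e. e \<in> E \<and> u \<notin> e \<and> w \<notin> e} \<union>
     {{z, x} | x. \<exists>e\<in>E. x \<notin> {u, w} \<and> (e = {x, u} \<or> e = {x, w})}"

definition edges_to :: "'v set set \<Rightarrow> 'v \<Rightarrow> 'v \<Rightarrow> 'v \<Rightarrow> 'v set set" where
  "edges_to E u w x = {e \<in> E. e = {x, u} \<or> e = {x, w}}"

definition merge_c :: "'v set set \<Rightarrow> ('v set \<Rightarrow> nat) \<Rightarrow> 'v \<Rightarrow> 'v \<Rightarrow> 'v \<Rightarrow> 'v set \<Rightarrow> nat" where
  "merge_c E c z u w e =
     (if \<exists>x. x \<notin> {u, w} \<and> e = {z, x}
      then Min (c ` edges_to E u w (THE x. x \<notin> {u, w} \<and> e = {z, x}))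
      else c e)"

definition merge_\<omega> :: "'v set set \<Rightarrow> ('v set \<Rightarrow> nat) \<Rightarrow> 'v \<Rightarrow> 'v \<Rightarrow> 'v \<Rightarrow> 'v set \<Rightarrow> nat" where
  "merge_\<omega> E \<omega> z u w e =
     (if \<exists>x. x \<notin> {u, w} \<and> e = {z, x}
      then sum \<omega> (edges_to E u w (THE x. x \<notin> {u, w} \<and> e = {z, x}))
      else \<omega> e)"

end

theory Submission
  imports Defs
begin


definition Rel :: "'v set set \<Rightarrow> ('v \<times> 'v) set" where
  "Rel F = {(a,b). {a,b} \<in> F}"

lemma is_walk_cons2: "is_walk F (a#b#zs) \<longleftrightarrow> {a,b} \<in> F \<and> is_walk F (b#zs)"
proof
  assume h: "is_walk F (a#b#zs)"
  have "{a,b} \<in> F" using h unfolding is_walk_def by (metis One_nat_def length_Cons nth_Cons_0 nth_Cons_Suc zero_less_Suc Suc_less_eq)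
  moreover have "is_walk F (b#zs)" unfolding is_walk_def
  proof (intro conjI allI impI)
    fix i assume "Suc i < length (b#zs)"
    then have "Suc (Suc i) < length (a#b#zs)" by simp
    then have "{(a#b#zs) ! Suc i, (a#b#zs) ! Suc (Suc i)} \<in> F" using h unfolding is_walk_def by blast
    then show "{(b # zs) ! i, (b # zs) ! Suc i} \<in> F" by simp
  qed simp
  ultimately show "{a,b} \<in> F \<and> is_walk F (b#zs)" by blast
next
  assume h: "{a,b} \<in> F \<and> is_walk F (b#zs)"
  show "is_walk F (a#b#zs)" unfolding is_walk_def
  proof (intro conjI allI impI)
    fix i assume i: "Suc i < length (a#b#zs)"
    show "{(a#b#zs) ! i, (a#b#zs) ! Suc i} \<in> F"
    proof (cases i)
      case 0 then show ?thesis using h by simp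
    next
      case (Suc j)
      then have "Suc j < length (b#zs)" using i by simp
      then have "{(b#zs) ! j, (b#zs) ! Suc j} \<in> F" using h unfolding is_walk_def by blast
      then show ?thesis using Suc by simp
    qed
  qed simp
qed

lemma walk_rtrancl: "is_walk F xs \<Longrightarrow> (hd xs, last xs) \<in> (Rel F)\<^sup>*"
proof (induction xs)
  case Nil then show ?case by (simp add: is_walk_def)
next
  case (Cons a ys)
  note IH = Cons.IH and pr = Cons.prems
  show ?case
  proof (cases ys)
    case Nil then show ?thesis by simp
  next
    case (Cons b zs)
    with pr have "{a,b} \<in> F" "is_walk F ys" using is_walk_cons2[of F a b zs] by simp_all
    then have "(hd ys, last ys) \<in> (Rel F)\<^sup>*" using IH by blast
    moreover have "(a, hd ys) \<in> Rel F" using \<open>{a,b} \<in> F\<close> Cons by (simp add: Rel_def)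
    ultimately show ?thesis using Cons by (auto intro: converse_rtrancl_into_rtrancl)
  qed
qed

lemma rtrancl_walk: "(x,y) \<in> (Rel F)\<^sup>* \<Longrightarrow> \<exists>xs. is_walk F xs \<and> hd xs = x \<and> last xs = y"
proof (induction rule: converse_rtrancl_induct)
  case base
  then show ?case by (rule exI[of _ "[y]"]) (simp add: is_walk_def)
next
  case (step a b)
  then obtain xs where xs: "is_walk F xs" "hd xs = b" "last xs = y" by blast
  then obtain zs where "xs = b # zs" by (cases xs) (auto simp: is_walk_def)
  moreover have "{a,b} \<in> F" using step(1) by (simp add: Rel_def)
  ultimately show ?case using xs is_walk_cons2[of F a b zs]
    by (intro exI[of _ "a # xs"]) auto
qed

lemma has_path_rtrancl: "has_path F x y \<longleftrightarrow> (x,y) \<in> (Rel F)\<^sup>*"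
  unfolding has_path_def using walk_rtrancl rtrancl_walk by metis

lemma Rel_sym: "(x,y) \<in> (Rel F)\<^sup>* \<Longrightarrow> (y,x) \<in> (Rel F)\<^sup>*"
proof -
  have "sym (Rel F)" unfolding sym_def Rel_def by (auto simp: insert_commute)
  then have "sym ((Rel F)\<^sup>*)" by (rule sym_rtrancl)
  then show "(x,y) \<in> (Rel F)\<^sup>* \<Longrightarrow> (y,x) \<in> (Rel F)\<^sup>*" unfolding sym_def by blast
qed

lemma rtrancl_map:
  assumes "(x,y) \<in> r\<^sup>*" "\<And>a b. (a,b) \<in> r \<Longrightarrow> f a = f b \<or> (f a, f b) \<in> S"
  shows "(f x, f y) \<in> S\<^sup>*"
  using assms(1)
proof (induction rule: rtrancl_induct)
  case base then show ?case by simp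
next
  case (step b c)
  then show ?case using assms(2)[of b c] by (auto intro: rtrancl_into_rtrancl)
qed




locale mg =
  fixes V :: "'v set" and E :: "'v set set" and s t u v z :: 'v
    and c \<omega> :: "'v set \<Rightarrow> nat"
  assumes inst: "wmcp_instance V E s t c \<omega>"
    and uV: "u \<in> V" and vV: "v \<in> V" and uv: "u \<noteq> v" and uvst: "{u, v} \<noteq> {s, t}"
    and fresh: "z \<notin> V - {u, v}"
begin

definition "m = mmap z u v"
definition "g e = m ` e"
definition "P e' = {e\<in>E. g e = e'}"
abbreviation "E' \<equiv> merge_E E z u v"

lemma sg: "simple_graph V E" and sV: "s \<in> V" and tV: "t \<in> V" and st: "s \<noteq> t"
  and pos: "\<And>e. e \<in> E \<Longrightarrow> c e > 0 \<and> \<omega> e > 0"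
  using inst unfolding wmcp_instance_def by auto

lemma finV: "finite V" using sg unfolding simple_graph_def by blast

lemma edgeE: "e \<in> E \<Longrightarrow> \<exists>x y. e = {x, y} \<and> x \<in> V \<and> y \<in> V \<and> x \<noteq> y"
  using sg unfolding simple_graph_def by blast

lemma finE: "finite E"
proof -
  have "E \<subseteq> Pow V" using edgeE by blast
  then show ?thesis using finV by (meson finite_Pow_iff finite_subset)
qed

lemma m_simp: "m x = (if x = u \<or> x = v then z else x)" unfolding m_def mmap_def by simp

lemma mV: "x \<in> V \<Longrightarrow> m x \<in> merge_V V z u v"
  unfolding merge_V_def m_simp by auto

lemma m_eq: "x \<in> V \<Longrightarrow> y \<in> V \<Longrightarrow> m x = m y \<Longrightarrow> x = y \<or> (x \<in> {u,v} \<and> y \<in> {u,v})"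
  using fresh unfolding m_simp by (auto split: if_splits)

lemma g_pair: "g {x,y} = {m x, m y}" unfolding g_def by simp

lemma m_other: "x \<notin> {u,v} \<Longrightarrow> m x = x" unfolding m_simp by simp
lemma m_u: "m u = z" and m_v: "m v = z" unfolding m_simp by simp_all

lemma E'_eq: "E' = g ` (E - {{u,v}})"
proof
  show "E' \<subseteq> g ` (E - {{u,v}})"
  proof
    fix e' assume "e' \<in> E'"
    then consider (a) "e' \<in> E" "u \<notin> e'" "v \<notin> e'"
      | (b) x e where "e' = {z,x}" "e \<in> E" "x \<notin> {u,v}" "e = {x,u} \<or> e = {x,v}"
      unfolding merge_E_def by blast
    then show "e' \<in> g ` (E - {{u,v}})"
    proof cases
      case a
      then obtain x y where xy: "e' = {x,y}" using edgeE by blast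
      then have "x \<notin> {u,v}" "y \<notin> {u,v}" using a by blast+
      then have "g e' = e'" using xy g_pair m_other by simp
      moreover have "e' \<noteq> {u,v}" using a by blast
      ultimately show ?thesis using a by (metis DiffI image_eqI singletonD)
    next
      case b
      have "g e = {x, z}" using b(4)
      proof
        assume "e = {x,u}" then show ?thesis using g_pair m_other[OF b(3)] m_u by simp
      next
        assume "e = {x,v}" then show ?thesis using g_pair m_other[OF b(3)] m_v by simp
      qed
      then have "g e = e'" using b(1) by (simp add: insert_commute)
      moreover have "e \<noteq> {u,v}" using b(3,4) by blast
      ultimately show ?thesis using b(2) by blast
    qed
  qed
next
  show "g ` (E - {{u,v}}) \<subseteq> E'"
  proof
    fix e' assume "e' \<in> g ` (E - {{u,v}})"
    then obtain e where e: "e \<in> E" "e \<noteq> {u,v}" "e' = g e" by blast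
    then obtain x y where xy: "e = {x,y}" "x \<in> V" "y \<in> V" "x \<noteq> y" using edgeE by blast
    have key: "\<And>p q. e = {p,q} \<Longrightarrow> p \<in> {u,v} \<Longrightarrow> p \<noteq> q \<Longrightarrow> e' \<in> E'"
    proof -
      fix p q assume pq: "e = {p,q}" "p \<in> {u,v}" "p \<noteq> q"
      have "q \<notin> {u,v}"
      proof
        assume "q \<in> {u,v}"
        then have "{p,q} = {u,v}" using pq(2,3) by blast
        then show False using e(2) pq(1) by simp
      qed
      have "e' = {m p, m q}" using e(3) pq(1) g_pair by simp
      moreover have "m p = z" using pq(2) m_u m_v by blast
      ultimately have e'eq: "e' = {z, q}" using m_other[OF \<open>q \<notin> {u,v}\<close>] by simp
      have "e = {q,u} \<or> e = {q,v}" using pq(1,2) by (auto simp: insert_commute)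
      then show "e' \<in> E'" unfolding merge_E_def using e'eq e(1) \<open>q \<notin> {u,v}\<close> by blast
    qed
    show "e' \<in> E'"
    proof (cases "x \<in> {u,v}")
      case True
      then show ?thesis using key xy by blast
    next
      case False
      show ?thesis
      proof (cases "y \<in> {u,v}")
        case True
        then show ?thesis using key[of y x] xy by (simp add: insert_commute)
      next
        case False2: False
        have "e' = e" using e(3) xy(1) g_pair m_other[OF False] m_other[OF False2] by simp
        moreover have "u \<notin> e" "v \<notin> e" using xy(1) False False2 by blast+
        ultimately show ?thesis unfolding merge_E_def using e(1) by blast
      qed
    qed
  qed
qed

lemma g_two: "e \<in> E \<Longrightarrow> e \<noteq> {u,v} \<Longrightarrow> \<exists>x y. e = {x,y} \<and> x \<in> V \<and> y \<in> V \<and> m x \<noteq> m y"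
proof -
  assume e: "e \<in> E" "e \<noteq> {u,v}"
  then obtain x y where xy: "e = {x,y}" "x \<in> V" "y \<in> V" "x \<noteq> y" using edgeE by blast
  have "m x \<noteq> m y"
  proof
    assume "m x = m y"
    then have "x \<in> {u,v} \<and> y \<in> {u,v}" using m_eq xy by blast
    then show False using xy e by auto
  qed
  then show ?thesis using xy by blast
qed

lemma guv_notin: "g {u,v} \<notin> E'"
proof
  assume "g {u,v} \<in> E'"
  then obtain e where e: "e \<in> E" "e \<noteq> {u,v}" "g e = g {u,v}" using E'_eq by auto
  then obtain x y where "e = {x,y}" "m x \<noteq> m y" using g_two by blast
  moreover have "g {u,v} = {z}" unfolding g_pair m_simp by simp
  ultimately have "{m x, m y} = {z}" using e(3) g_pair by simp
  then have "m x \<in> {z}" "m y \<in> {z}" by blast+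
  then show False using \<open>m x \<noteq> m y\<close> by simp
qed

lemma P_nonempty: "e' \<in> E' \<Longrightarrow> P e' \<noteq> {}"
  unfolding P_def using E'_eq by auto

lemma P_fin: "finite (P e')" unfolding P_def using finE by simp

lemma P_sub: "e' \<in> E' \<Longrightarrow> P e' \<subseteq> E - {{u,v}}"
  unfolding P_def using guv_notin by auto

lemma eV: "e \<in> E \<Longrightarrow> e \<subseteq> V" using edgeE by blast

lemma g_edge_to: "x \<notin> {u,v} \<Longrightarrow> e = {x,u} \<or> e = {x,v} \<Longrightarrow> g e = {z,x}"
proof -
  assume x: "x \<notin> {u,v}" and ed: "e = {x,u} \<or> e = {x,v}"
  from ed have "g e = {x, z}"
  proof
    assume "e = {x,u}" then show ?thesis using g_pair m_other[OF x] m_u by simp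
  next
    assume "e = {x,v}" then show ?thesis using g_pair m_other[OF x] m_v by simp
  qed
  then show ?thesis by (simp add: insert_commute)
qed

lemma merge_vals: assumes "e' \<in> E'"
  shows "merge_c E c z u v e' = Min (c ` P e') \<and> merge_\<omega> E \<omega> z u v e' = sum \<omega> (P e')"
proof -
  from assms consider (a) "e' \<in> E" "u \<notin> e'" "v \<notin> e'"
      | (b) x e where "e' = {z,x}" "e \<in> E" "x \<notin> {u,v}" "e = {x,u} \<or> e = {x,v}"
      unfolding merge_E_def by blast
  then show ?thesis
  proof cases
    case a
    have zn: "z \<notin> e'"
    proof
      assume "z \<in> e'"
      then have "z \<in> V" "z \<notin> {u,v}" using a eV by blast+
      then show False using fresh by blast
    qed
    then have nx: "\<not> (\<exists>x. x \<notin> {u, v} \<and> e' = {z, x})" by blast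
    have "P e' = {e'}"
    proof
      obtain x y where xy: "e' = {x,y}" using a edgeE by blast
      then have "x \<notin> {u,v}" "y \<notin> {u,v}" using a by blast+
      then have "g e' = e'" using xy g_pair m_other by simp
      then show "{e'} \<subseteq> P e'" unfolding P_def using a by blast
    next
      show "P e' \<subseteq> {e'}"
      proof
        fix e2 assume "e2 \<in> P e'"
        then have e2: "e2 \<in> E" "g e2 = e'" unfolding P_def by auto
        then obtain x y where xy: "e2 = {x,y}" using edgeE by blast
        have "g e2 = {m x, m y}" using xy g_pair by simp
        then have "m x \<in> e'" "m y \<in> e'" using e2(2) by blast+
        then have "m x \<noteq> z" "m y \<noteq> z" using zn by auto
        then have "x \<notin> {u,v}" "y \<notin> {u,v}" using m_u m_v by blast+
        then have "g e2 = e2" using xy g_pair m_other by simp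
        then show "e2 \<in> {e'}" using e2 by simp
      qed
    qed
    then show ?thesis unfolding merge_c_def merge_\<omega>_def if_not_P[OF nx] by simp
  next
    case b
    have "x \<in> e" using b(4) by blast
    then have xV: "x \<in> V" using b(2) eV by blast
    have xz: "x \<noteq> z" using xV b(3) fresh by blast
    have ex: "\<exists>y. y \<notin> {u, v} \<and> e' = {z, y}" using b by blast
    have th: "(THE y. y \<notin> {u, v} \<and> e' = {z, y}) = x"
    proof (rule the_equality)
      show "x \<notin> {u, v} \<and> e' = {z, x}" using b by blast
    next
      fix y assume y: "y \<notin> {u, v} \<and> e' = {z, y}"
      then have eq: "{z,y} = {z,x}" using b(1) by simp
      have "y \<in> {z,x}" unfolding eq[symmetric] by simp
      moreover have "x \<in> {z,y}" unfolding eq by simp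
      ultimately show "y = x" using xz by blast
    qed
    have "P e' = edges_to E u v x"
    proof
      show "edges_to E u v x \<subseteq> P e'"
      proof
        fix e2 assume "e2 \<in> edges_to E u v x"
        then have e2: "e2 \<in> E" "e2 = {x,u} \<or> e2 = {x,v}" unfolding edges_to_def by blast+
        have "g e2 = e'" using g_edge_to[OF b(3) e2(2)] b(1) by simp
        then show "e2 \<in> P e'" unfolding P_def using e2(1) by blast
      qed
    next
      show "P e' \<subseteq> edges_to E u v x"
      proof
        fix e2 assume "e2 \<in> P e'"
        then have e2: "e2 \<in> E" "g e2 = {z,x}" unfolding P_def using b by auto
        then obtain p q where pq: "e2 = {p,q}" "p \<in> V" "q \<in> V" "p \<noteq> q" using edgeE by blast
        have gpq: "{m p, m q} = {z,x}" using e2 pq g_pair by simp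
        have cl: "\<And>w. w \<in> V \<Longrightarrow> m w \<in> {z,x} \<Longrightarrow> w = x \<or> w \<in> {u,v}"
        proof -
          fix w assume w: "w \<in> V" "m w \<in> {z,x}"
          show "w = x \<or> w \<in> {u,v}"
          proof (cases "w \<in> {u,v}")
            case False
            then have "w \<in> {z,x}" using w m_other by simp
            moreover have "w \<noteq> z" using False w fresh by blast
            ultimately show ?thesis by blast
          qed simp
        qed
        have "m p \<in> {z,x}" "m q \<in> {z,x}" unfolding gpq[symmetric] by simp_all
        then have p: "p = x \<or> p \<in> {u,v}" and q: "q = x \<or> q \<in> {u,v}" using cl pq(2,3) by blast+
        have notboth: "\<not> (p \<in> {u,v} \<and> q \<in> {u,v})"
        proof
          assume "p \<in> {u,v} \<and> q \<in> {u,v}"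
          then have "m p = z" "m q = z" using m_u m_v by blast+
          then have "{z,x} = {z}" using gpq by simp
          then have "x \<in> {z}" by (metis insertI1 insert_commute)
          then show False using xz by simp
        qed
        have "(p = x \<and> q \<in> {u,v}) \<or> (q = x \<and> p \<in> {u,v})" using p q notboth pq(4) by blast
        then have "e2 = {x,u} \<or> e2 = {x,v}"
        proof
          assume "p = x \<and> q \<in> {u,v}" then show ?thesis using pq(1) by blast
        next
          assume h: "q = x \<and> p \<in> {u,v}"
          then have "e2 = {x,p}" using pq(1) by (simp add: insert_commute)
          then show ?thesis using h by blast
        qed
        then show "e2 \<in> edges_to E u v x" unfolding edges_to_def using e2 by blast
      qed
    qed
    then show ?thesis unfolding merge_c_def merge_\<omega>_def if_P[OF ex] th by simp
  qed
qed

lemma P_disj: "e1 \<noteq> e2 \<Longrightarrow> P e1 \<inter> P e2 = {}" unfolding P_def by auto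

lemma gP: "e \<in> P e' \<Longrightarrow> g e = e'" unfolding P_def by auto

end



context mg begin

abbreviation "c' \<equiv> merge_c E c z u v"
abbreviation "\<omega>' \<equiv> merge_\<omega> E \<omega> z u v"

lemma E'_fin: "finite E'" using E'_eq finE by simp

lemma P_E: "P e' \<subseteq> E" unfolding P_def by blast

lemma instance': "wmcp_instance (merge_V V z u v) E' (m s) (m t) c' \<omega>'"
  unfolding wmcp_instance_def
proof (intro conjI ballI)
  show "simple_graph (merge_V V z u v) E'" unfolding simple_graph_def
  proof (intro conjI ballI)
    show "finite (merge_V V z u v)" using finV by (simp add: merge_V_def)
  next
    fix e' assume "e' \<in> E'"
    then obtain e where e: "e \<in> E" "e \<noteq> {u,v}" "e' = g e" using E'_eq by blast
    then obtain x y where xy: "e = {x,y}" "x \<in> V" "y \<in> V" "m x \<noteq> m y" using g_two by blast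
    then have "e' = {m x, m y}" using e(3) g_pair by simp
    then show "\<exists>x y. e' = {x, y} \<and> x \<in> merge_V V z u v \<and> y \<in> merge_V V z u v \<and> x \<noteq> y"
      using xy mV by blast
  qed
next
  show "m s \<in> merge_V V z u v" using sV mV by blast
  show "m t \<in> merge_V V z u v" using tV mV by blast
  show "m s \<noteq> m t"
  proof
    assume "m s = m t"
    then have "s \<in> {u,v} \<and> t \<in> {u,v}" using m_eq sV tV st by blast
    then have "{s,t} = {u,v}" using st uv by blast
    then show False using uvst by simp
  qed
next
  fix e' assume e': "e' \<in> E'"
  have fin: "finite (P e')" and ne: "P e' \<noteq> {}" using P_fin P_nonempty e' by auto
  have cp: "\<forall>x\<in>P e'. 0 < c x" using pos P_E by blast
  have "0 < Min (c ` P e')" using fin ne cp by (simp add: Min_gr_iff)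
  moreover have wp: "\<forall>x\<in>P e'. 0 < \<omega> x" using pos P_E by blast
  have "0 < sum \<omega> (P e')" using fin ne wp by (intro sum_pos) auto
  ultimately show "0 < c' e'" "0 < \<omega>' e'" using merge_vals[OF e'] by simp_all
qed

lemma c'_le: "e \<in> E \<Longrightarrow> e \<noteq> {u,v} \<Longrightarrow> c' (g e) \<le> c e"
proof -
  assume e: "e \<in> E" "e \<noteq> {u,v}"
  then have ge: "g e \<in> E'" using E'_eq by blast
  have "e \<in> P (g e)" unfolding P_def using e by blast
  then have "Min (c ` P (g e)) \<le> c e" using P_fin by (intro Min_le) auto
  then show ?thesis using merge_vals[OF ge] by simp
qed

lemma dir1: assumes "wmcp_yes E s t c \<omega> d a" shows "wmcp_yes E' (m s) (m t) c' \<omega>' d a"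
proof -
  obtain D where D: "D \<subseteq> E" "int (sum c D) \<le> d"
    "\<And>A. is_cut E s t A \<and> A \<subseteq> E - D \<Longrightarrow> int (sum \<omega> A) > a"
    using assms unfolding wmcp_yes_def by blast
  define D0 where "D0 = D - {{u,v}}"
  define D' where "D' = g ` D0"
  have finD: "finite D" using D(1) finE finite_subset by blast
  then have finD0: "finite D0" unfolding D0_def by simp
  have D'E: "D' \<subseteq> E'" unfolding D'_def D0_def using D(1) E'_eq by blast
  have "sum c' D' \<le> sum (c' \<circ> g) D0" unfolding D'_def using finD0 by (intro sum_image_le) auto
  also have "\<dots> \<le> sum c D0" using c'_le D(1) unfolding D0_def by (intro sum_mono) auto
  also have "\<dots> \<le> sum c D" using finD unfolding D0_def by (intro sum_mono2) auto
  finally have cost: "int (sum c' D') \<le> d" using D(2) by linarith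
  have cut: "int (sum \<omega>' A') > a" if A': "is_cut E' (m s) (m t) A'" "A' \<subseteq> E' - D'" for A'
  proof -
    define A where "A = {e\<in>E. g e \<in> A'}"
    have noP: "\<not> has_path (E' - A') (m s) (m t)" using A'(1) unfolding is_cut_def by blast
    have "\<not> has_path (E - A) s t"
    proof
      assume "has_path (E - A) s t"
      then have "(s,t) \<in> (Rel (E - A))\<^sup>*" using has_path_rtrancl by metis
      then have "(m s, m t) \<in> (Rel (E' - A'))\<^sup>*"
      proof (rule rtrancl_map)
        fix p q assume "(p,q) \<in> Rel (E - A)"
        then have pq: "{p,q} \<in> E" "{p,q} \<notin> A" unfolding Rel_def by auto
        show "m p = m q \<or> (m p, m q) \<in> Rel (E' - A')"
        proof (cases "{p,q} = {u,v}")
          case True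
          then have "p \<in> {u,v}" "q \<in> {u,v}" by blast+
          then have "m p = z" "m q = z" using m_u m_v by auto
          then show ?thesis by simp
        next
          case False
          then have "g {p,q} \<in> E'" using pq(1) E'_eq by blast
          moreover have "g {p,q} \<notin> A'" using pq unfolding A_def by blast
          ultimately show ?thesis unfolding Rel_def using g_pair by simp
        qed
      qed
      then show False using noP has_path_rtrancl by metis
    qed
    then have isc: "is_cut E s t A" unfolding is_cut_def A_def by blast
    have AD: "A \<subseteq> E - D"
    proof
      fix e assume eA: "e \<in> A"
      then have eE: "e \<in> E" and geA: "g e \<in> A'" unfolding A_def by auto
      have "e \<notin> D"
      proof
        assume eD: "e \<in> D"
        show False
        proof (cases "e = {u,v}")
          case True
          then show False using geA A'(2) guv_notin by blast
        next
          case False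
          then have "g e \<in> D'" unfolding D'_def D0_def using eD by blast
          then show False using geA A'(2) by blast
        qed
      qed
      then show "e \<in> E - D" using eE by blast
    qed
    have lt: "int (sum \<omega> A) > a" using D(3) isc AD by blast
    have finA: "finite A" unfolding A_def using finE by simp
    have img: "g ` A = A'"
    proof
      show "g ` A \<subseteq> A'" unfolding A_def by blast
    next
      show "A' \<subseteq> g ` A"
      proof
        fix e' assume e': "e' \<in> A'"
        then have "e' \<in> E'" using A'(2) by blast
        then obtain e where "e \<in> P e'" using P_nonempty by blast
        then have "e \<in> E" "g e = e'" unfolding P_def by auto
        then show "e' \<in> g ` A" unfolding A_def using e' by blast
      qed
    qed
    have "sum \<omega> A = sum (\<lambda>y. sum \<omega> {x\<in>A. g x = y}) (g ` A)"
      using finA by (rule sum.image_gen)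
    also have "\<dots> = sum \<omega>' A'" unfolding img
    proof (rule sum.cong)
      fix y assume y: "y \<in> A'"
      then have yE: "y \<in> E'" using A'(2) by blast
      have "{x\<in>A. g x = y} = P y" unfolding A_def P_def using y by blast
      then show "sum \<omega> {x\<in>A. g x = y} = \<omega>' y" using merge_vals[OF yE] by simp
    qed simp
    finally show ?thesis using lt by simp
  qed
  show ?thesis unfolding wmcp_yes_def using D'E cost cut by blast
qed

lemma same: assumes "(u,v) \<in> (Rel (E-A))\<^sup>*" "x \<in> V" "y \<in> V" "m x = m y"
  shows "(x,y) \<in> (Rel (E-A))\<^sup>*"
proof -
  have vu: "(v,u) \<in> (Rel (E-A))\<^sup>*" using assms(1) Rel_sym by metis
  from m_eq[OF assms(2-4)] consider "x = y" | "x \<in> {u,v}" "y \<in> {u,v}" by blast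
  then show ?thesis
  proof cases
    case 2
    then show ?thesis using assms(1) vu by auto
  qed simp
qed

lemma lift: assumes uvA: "(u,v) \<in> (Rel (E-A))\<^sup>*"
  and pq: "(p,q) \<in> (Rel (E' - {e'\<in>E'. P e' \<subseteq> A}))\<^sup>*"
  shows "x \<in> V \<Longrightarrow> y \<in> V \<Longrightarrow> m x = p \<Longrightarrow> m y = q \<Longrightarrow> (x,y) \<in> (Rel (E-A))\<^sup>*"
  using pq
proof (induction arbitrary: y rule: rtrancl_induct)
  case base
  then show ?case using same[OF uvA] by simp
next
  case (step b c2)
  from step.hyps(2) have bc: "{b,c2} \<in> E'" "\<not> P {b,c2} \<subseteq> A" unfolding Rel_def by auto
  then obtain e where e: "e \<in> P {b,c2}" "e \<notin> A" by blast
  then have eE: "e \<in> E" and ge: "g e = {b,c2}" unfolding P_def by auto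
  then obtain w1 w2 where w: "e = {w1,w2}" "w1 \<in> V" "w2 \<in> V" using edgeE by blast
  have gw: "{m w1, m w2} = {b,c2}" using ge w(1) g_pair by simp
  have conn: "\<And>p1 p2. p1 \<in> e \<Longrightarrow> p2 \<in> e \<Longrightarrow> (p1,p2) \<in> (Rel (E-A))\<^sup>*"
  proof -
    fix p1 p2 assume p: "p1 \<in> e" "p2 \<in> e"
    show "(p1,p2) \<in> (Rel (E-A))\<^sup>*"
    proof (cases "p1 = p2")
      case False
      then have "{p1,p2} = e" using p w(1) by blast
      then have "(p1,p2) \<in> Rel (E-A)" unfolding Rel_def using eE e(2) by simp
      then show ?thesis by blast
    qed simp
  qed
  have "b \<in> {m w1, m w2}" "c2 \<in> {m w1, m w2}" unfolding gw by simp_all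
  then obtain w w' where ww: "w \<in> e" "w' \<in> e" "m w = b" "m w' = c2" using w(1) by blast
  have wV: "w \<in> V" "w' \<in> V" using ww(1,2) w by blast+
  have "(x,w) \<in> (Rel (E-A))\<^sup>*" using step.IH[OF step.prems(1) wV(1) step.prems(3) ww(3)] .
  moreover have "(w,w') \<in> (Rel (E-A))\<^sup>*" using conn ww by blast
  moreover have "(w',y) \<in> (Rel (E-A))\<^sup>*" using same[OF uvA wV(2) step.prems(2)] ww(4) step.prems(4) by simp
  ultimately show ?case by (meson rtrancl_trans)
qed

lemma dir2: assumes "wmcp_yes E' (m s) (m t) c' \<omega>' d a"
  and cuts: "\<forall>A. is_cut E u v A \<longrightarrow> int (sum \<omega> A) \<ge> a + 1"
  shows "wmcp_yes E s t c \<omega> d a"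
proof -
  obtain D' where D': "D' \<subseteq> E'" "int (sum c' D') \<le> d"
    "\<And>A'. is_cut E' (m s) (m t) A' \<and> A' \<subseteq> E' - D' \<Longrightarrow> int (sum \<omega>' A') > a"
    using assms(1) unfolding wmcp_yes_def by blast
  define h where "h e' = (SOME e. e \<in> P e' \<and> c e = c' e')" for e'
  have hP: "h e' \<in> P e' \<and> c (h e') = c' e'" if e': "e' \<in> E'" for e'
  proof -
    have "Min (c ` P e') \<in> c ` P e'" using P_fin P_nonempty[OF e'] by (intro Min_in) auto
    then have "\<exists>e. e \<in> P e' \<and> c e = c' e'" using merge_vals[OF e'] by auto
    then show ?thesis unfolding h_def by (rule someI_ex)
  qed
  define D where "D = h ` D'"
  have DE: "D \<subseteq> E" unfolding D_def using hP D'(1) P_E by blast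
  have inj: "inj_on h D'"
  proof (rule inj_onI)
    fix x y assume "x \<in> D'" "y \<in> D'" "h x = h y"
    then show "x = y" using hP D'(1) gP by (metis subsetD)
  qed
  have "sum c D = sum (c \<circ> h) D'" unfolding D_def using inj by (rule sum.reindex)
  also have "\<dots> = sum c' D'" using hP D'(1) by (intro sum.cong) auto
  finally have cost: "int (sum c D) \<le> d" using D'(2) by simp
  have cut: "int (sum \<omega> A) > a" if A: "is_cut E s t A" "A \<subseteq> E - D" for A
  proof (rule ccontr)
    assume nlt: "\<not> int (sum \<omega> A) > a"
    have AE: "A \<subseteq> E" using A(2) by blast
    have "\<not> is_cut E u v A" using cuts nlt by force
    then have "has_path (E - A) u v" unfolding is_cut_def using AE by blast
    then have uvA: "(u,v) \<in> (Rel (E-A))\<^sup>*" using has_path_rtrancl by metis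
    define A' where "A' = {e'\<in>E'. P e' \<subseteq> A}"
    have A'D: "A' \<subseteq> E' - D'"
    proof
      fix e' assume e': "e' \<in> A'"
      then have "e' \<in> E'" "P e' \<subseteq> A" unfolding A'_def by auto
      have "e' \<notin> D'"
      proof
        assume "e' \<in> D'"
        then have "h e' \<in> D" "h e' \<in> P e'" unfolding D_def using hP D'(1) by auto
        then show False using \<open>P e' \<subseteq> A\<close> A(2) by blast
      qed
      then show "e' \<in> E' - D'" using \<open>e' \<in> E'\<close> by blast
    qed
    have "\<not> has_path (E' - A') (m s) (m t)"
    proof
      assume "has_path (E' - A') (m s) (m t)"
      then have "(m s, m t) \<in> (Rel (E' - A'))\<^sup>*" using has_path_rtrancl by metis
      then have "(s,t) \<in> (Rel (E-A))\<^sup>*" using lift[OF uvA, of "m s" "m t" s t] sV tV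
        unfolding A'_def by blast
      then have "has_path (E - A) s t" using has_path_rtrancl by metis
      then show False using A(1) unfolding is_cut_def by blast
    qed
    then have "is_cut E' (m s) (m t) A'" unfolding is_cut_def A'_def by blast
    then have lt: "int (sum \<omega>' A') > a" using D'(3) A'D by blast
    have finA': "finite A'" unfolding A'_def using E'_fin by simp
    have "sum \<omega>' A' = sum (\<lambda>e'. sum \<omega> (P e')) A'"
      using merge_vals A'D by (intro sum.cong) auto
    also have "\<dots> = sum \<omega> (\<Union>(P ` A'))"
      using finA' P_fin P_disj by (intro sum.UNION_disjoint[symmetric]) auto
    also have "\<dots> \<le> sum \<omega> A"
    proof (rule sum_mono2)
      show "finite A" using AE finE finite_subset by blast
      show "\<Union>(P ` A') \<subseteq> A" unfolding A'_def by blast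
    qed simp
    finally show False using lt nlt by simp
  qed
  show ?thesis unfolding wmcp_yes_def using DE cost cut by blast
qed

end

theorem mainTheorem18:
  fixes V :: "'v set" and E :: "'v set set" and s t u v z :: 'v
    and c \<omega> :: "'v set \<Rightarrow> nat" and d a :: int
  assumes inst: "wmcp_instance V E s t c \<omega>"
    and uv: "u \<in> V" "v \<in> V" "u \<noteq> v" "{u, v} \<noteq> {s, t}"
    and cuts: "\<forall>A. is_cut E u v A \<longrightarrow> int (sum \<omega> A) \<ge> a + 1"
    and fresh: "z \<notin> V - {u, v}"
  shows "wmcp_instance (merge_V V z u v) (merge_E E z u v) (mmap z u v s) (mmap z u v t)
           (merge_c E c z u v) (merge_\<omega> E \<omega> z u v)
       \<and> (wmcp_yes E s t c \<omega> d a \<longleftrightarrow>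
          wmcp_yes (merge_E E z u v) (mmap z u v s) (mmap z u v t)
                   (merge_c E c z u v) (merge_\<omega> E \<omega> z u v) d a)"
proof -
  interpret mg V E s t u v z c \<omega>
    using inst uv fresh by unfold_locales auto
  show ?thesis using instance' dir1 dir2[OF _ cuts] unfolding m_def by blast
qed


end
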